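(* Let $s:\mathcal{X}\times\mathcal{Y}\to\mathbb{R}$ be a fixed measurable nonconformity score, $S_1,\dots,S_d$ probability distributions on $\mathcal{X}\times\mathcal{Y}$, $f$ a function as described in the context, $\rho>0$ and $\alpha\in(0,1)$. For each $i\in[d]$ let $(X_{ij},Y_{ij})_{j=1}^{m_i}$ be i.i.d. from $S_i$, $V_{ij}=s(X_{ij},Y_{ij})$, $\hat F_i(x)=\frac{1}{m_i}\sum_{j=1}^{m_i}\mathbb{I}_{(-\infty,x]}(V_{ij})$ and $\hat F_{\min}(x)=\min_i\hat F_i(x)$. Let $(X_{n+1},Y_{n+1})$ be such that $V_{n+1}=s(X_{n+1},Y_{n+1})\sim P$ for some $P\in\mathcal{P}_{f,\rho}$, with $V_{n+1}$ independent of $\{V_{ij}\}$. For arbitrary $\epsilon>0$ set $$\alpha'=1-g_{f,\rho}\left(\epsilon+g_{f,\rho}^{-1}\left(\frac{1-\alpha}{1-2\sum_{i=1}^de^{-2m_i\epsilon^2}}\right)\right),$$ $t\coloneqq\mathcal{Q}\left(g_{f,\rho}^{-1}(1-\alpha');\hat F_{\min}\right)$ and $\widetilde{\mathcal{C}}(x)\coloneqq\{y\in\mathcal{Y}:s(x,y)\le t\}$. Then $$\mathbb{P}\left(Y_{n+1}\in\widetilde{\mathcal{C}}(X_{n+1})\right)\ge1-\alpha.$$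
   Context: $f:\mathbb{R}\to\mathbb{R}\cup\{+\infty\}$ is a closed convex function with $f(1)=0$ and $f(t)=+\infty$ for $t<0$; for $P\ll Q$, $D_f(P\Vert Q)\coloneqq\int f\left(\frac{dP}{dQ}\right)dQ$. $\mathcal{CH}(P_1,\dots,P_d)\coloneqq\{\sum_i\lambda_iP_i:\lambda_i\ge0,\sum_i\lambda_i=1\}$; $s\#T$ is the push-forward $(s\#T)(A)=T(s^{-1}(A))$. $\mathcal{P}_{f,\rho}\coloneqq\{S\text{ a distribution on }\mathbb{R}:\exists S_0\in\mathcal{CH}(s\#S_1,\dots,s\#S_d),\ D_f(S\Vert S_0)\le\rho\}$. $g_{f,\rho}(\beta)\coloneqq\inf\{z\in[0,1]:\beta f(z/\beta)+(1-\beta)f((1-z)/(1-\beta))\le\rho\}$ for $\beta\in[0,1]$, and $g_{f,\rho}^{-1}(\tau)\coloneqq\sup\{\beta\in[0,1]:g_{f,\rho}(\beta)\le\tau\}$. For a c.d.f. $F$, $\mathcal{Q}(\beta;F)\coloneqq\inf\{q:F(q)\ge\beta\}$. *)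

theory Defs
  imports "HOL-Probability.Probability"
begin

definition closed_convex_fdiv_fun :: "(real \<Rightarrow> ereal) \<Rightarrow> bool" where
  "closed_convex_fdiv_fun f \<longleftrightarrow>
     (\<forall>t. f t \<noteq> -\<infinity>) \<and>
     (\<forall>x y u. 0 \<le> u \<and> u \<le> 1 \<longrightarrow>
        f (u * x + (1 - u) * y) \<le> ereal u * f x + ereal (1 - u) * f y) \<and>
     closed {p :: real \<times> real. f (fst p) \<le> ereal (snd p)} \<and>
     f 1 = 0 \<and>
     (\<forall>t<0. f t = \<infinity>)"

text \<open>D_f(P||Q) = integral of f(dP/dQ) dQ (positive part minus negative part), meant for P << Q.\<close>
definition fdiv :: "(real \<Rightarrow> ereal) \<Rightarrow> 'a measure \<Rightarrow> 'a measure \<Rightarrow> ereal" where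
  "fdiv f P Q =
     enn2ereal (\<integral>\<^sup>+ x. e2ennreal (max 0 (f (enn2real (RN_deriv Q P x)))) \<partial>Q)
   - enn2ereal (\<integral>\<^sup>+ x. e2ennreal (max 0 (- f (enn2real (RN_deriv Q P x)))) \<partial>Q)"

definition mixtures :: "(nat \<Rightarrow> real measure) \<Rightarrow> nat \<Rightarrow> real measure set" where
  "mixtures Ps d = {Q. sets Q = sets borel \<and>
     (\<exists>lam :: nat \<Rightarrow> real. (\<forall>i<d. 0 \<le> lam i) \<and> (\<Sum>i<d. lam i) = 1 \<and>
        (\<forall>A\<in>sets borel. emeasure Q A = (\<Sum>i<d. ennreal (lam i) * emeasure (Ps i) A)))}"

text \<open>P_{f,rho}: distributions S on R with D_f(S||S0) <= rho for some S0 in CH(s#S_1,...,s#S_d)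
  (D_f only defined for S << S0).\<close>
definition Pfr :: "(real \<Rightarrow> ereal) \<Rightarrow> real \<Rightarrow> ('a \<Rightarrow> real) \<Rightarrow> (nat \<Rightarrow> 'a measure) \<Rightarrow> nat
    \<Rightarrow> real measure set" where
  "Pfr f \<rho> s S d = {P. prob_space P \<and> sets P = sets borel \<and>
     (\<exists>S0 \<in> mixtures (\<lambda>i. distr (S i) borel s) d.
        absolutely_continuous S0 P \<and> fdiv f P S0 \<le> ereal \<rho>)}"

definition persp :: "(real \<Rightarrow> ereal) \<Rightarrow> real \<Rightarrow> real \<Rightarrow> ereal" where
  "persp f b z = (if b = 0 then (if z = 0 then 0 else \<infinity>) else ereal b * f (z / b))"

definition g_fr :: "(real \<Rightarrow> ereal) \<Rightarrow> real \<Rightarrow> real \<Rightarrow> real" where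
  "g_fr f \<rho> \<beta> = Inf {z \<in> {0..1}. persp f \<beta> z + persp f (1 - \<beta>) (1 - z) \<le> ereal \<rho>}"

definition g_fr_inv :: "(real \<Rightarrow> ereal) \<Rightarrow> real \<Rightarrow> real \<Rightarrow> real" where
  "g_fr_inv f \<rho> \<tau> = Sup {\<beta> \<in> {0..1}. g_fr f \<rho> \<beta> \<le> \<tau>}"

definition emp_cdf :: "(nat \<Rightarrow> real) \<Rightarrow> nat \<Rightarrow> real \<Rightarrow> real" where
  "emp_cdf vs k x = (\<Sum>j<k. indicator {..x} (vs j)) / real k"

definition quantile :: "real \<Rightarrow> (real \<Rightarrow> real) \<Rightarrow> real" where
  "quantile \<beta> F = Inf {q. F q \<ge> \<beta>}"

end

theory Submission
  imports Defs
begin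

lemma ccf_D:
  assumes "closed_convex_fdiv_fun f"
  shows ccf_neg_all: "\<forall>t. f t \<noteq> -\<infinity>"
    and ccf_conv_all: "\<forall>x y u. 0 \<le> u \<and> u \<le> 1 \<longrightarrow> f (u * x + (1 - u) * y) \<le> ereal u * f x + ereal (1 - u) * f y"
    and ccf_f1: "f 1 = 0"
proof -
  show "\<forall>t. f t \<noteq> -\<infinity>" using assms unfolding closed_convex_fdiv_fun_def by (elim conjE) assumption
  show "\<forall>x y u. 0 \<le> u \<and> u \<le> 1 \<longrightarrow> f (u * x + (1 - u) * y) \<le> ereal u * f x + ereal (1 - u) * f y"
    using assms unfolding closed_convex_fdiv_fun_def by (elim conjE) assumption
  show "f 1 = 0" using assms unfolding closed_convex_fdiv_fun_def by (elim conjE) assumption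
qed

lemma ccf_neg: "closed_convex_fdiv_fun f \<Longrightarrow> f t \<noteq> -\<infinity>"
  using ccf_neg_all by blast

lemma ccf_fin: "closed_convex_fdiv_fun f \<Longrightarrow> f t \<noteq> \<infinity> \<Longrightarrow> f t = ereal (real_of_ereal (f t))"
  using ccf_neg[of f t] by (cases "f t") auto

lemma ccf_conv:
  assumes "closed_convex_fdiv_fun f" "0 \<le> u" "u \<le> 1" "f x = ereal a" "f y = ereal b"
  shows "f (u * x + (1 - u) * y) \<le> ereal (u * a + (1 - u) * b)"
proof -
  have "f (u * x + (1 - u) * y) \<le> ereal u * f x + ereal (1 - u) * f y"
    using ccf_conv_all[OF assms(1)] assms(2,3) by blast
  also have "\<dots> = ereal (u * a + (1 - u) * b)" using assms(4,5) by simp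
  finally show ?thesis .
qed

lemma ccf_slope:
  assumes f: "closed_convex_fdiv_fun f" and "s < x" "x < t" "f s \<noteq> \<infinity>" "f x \<noteq> \<infinity>" "f t \<noteq> \<infinity>"
  shows "(real_of_ereal (f x) - real_of_ereal (f s)) / (x - s) \<le> (real_of_ereal (f t) - real_of_ereal (f x)) / (t - x)"
proof -
  define u where "u = (t - x) / (t - s)"
  have u: "0 \<le> u" "u \<le> 1" using assms by (auto simp: u_def)
  have ut: "u * (t - s) = t - x" using assms by (simp add: u_def)
  have xe: "x = u * s + (1 - u) * t" using ut by (simp add: algebra_simps)
  have "f x \<le> ereal (u * real_of_ereal (f s) + (1 - u) * real_of_ereal (f t))"
    unfolding xe by (rule ccf_conv[OF f u]) (rule ccf_fin[OF f], use assms in simp)+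
  then have h: "real_of_ereal (f x) \<le> u * real_of_ereal (f s) + (1 - u) * real_of_ereal (f t)"
    using assms ccf_neg[OF f, of x] by (cases "f x") auto
  have "(t - s) * real_of_ereal (f x) \<le> (t - x) * real_of_ereal (f s) + (x - s) * real_of_ereal (f t)"
  proof -
    have "(t - s) * real_of_ereal (f x) \<le> (t - s) * (u * real_of_ereal (f s) + (1 - u) * real_of_ereal (f t))"
      using h assms by (intro mult_left_mono) auto
    also have "\<dots> = (u * (t - s)) * real_of_ereal (f s) + (t - s) * real_of_ereal (f t) - (u * (t - s)) * real_of_ereal (f t)"
      by (simp add: algebra_simps)
    also have "\<dots> = (t - x) * real_of_ereal (f s) + (x - s) * real_of_ereal (f t)"
      unfolding ut by (simp add: algebra_simps)
    finally show ?thesis .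
  qed
  then have k: "(real_of_ereal (f x) - real_of_ereal (f s)) * (t - x) \<le> (real_of_ereal (f t) - real_of_ereal (f x)) * (x - s)"
    by (simp add: algebra_simps)
  have p: "0 < x - s" "0 < t - x" using assms by auto
  show ?thesis using k p by (simp add: field_simps)
qed

lemma ccf_subgrad:
  assumes f: "closed_convex_fdiv_fun f" and "lo < x0" "x0 < hi" "f lo \<noteq> \<infinity>" "f hi \<noteq> \<infinity>"
  shows "f x0 \<noteq> \<infinity> \<and> (\<exists>k. \<forall>t. ereal (real_of_ereal (f x0) + k * (t - x0)) \<le> f t)"
proof -
  define u where "u = (hi - x0) / (hi - lo)"
  have u: "0 \<le> u" "u \<le> 1" using assms by (auto simp: u_def)
  have ut: "u * (hi - lo) = hi - x0" using assms by (simp add: u_def)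
  have xe: "x0 = u * lo + (1 - u) * hi" using ut by (simp add: algebra_simps)
  have "f x0 \<le> ereal (u * real_of_ereal (f lo) + (1 - u) * real_of_ereal (f hi))"
    unfolding xe by (rule ccf_conv[OF f u]) (rule ccf_fin[OF f], use assms in simp)+
  then have fx0: "f x0 \<noteq> \<infinity>" by auto
  let ?r = "\<lambda>t. real_of_ereal (f t)"
  define L where "L = {(?r x0 - ?r s) / (x0 - s) | s. s < x0 \<and> f s \<noteq> \<infinity>}"
  define k where "k = Sup L"
  have Lne: "L \<noteq> {}" using assms unfolding L_def by auto
  have Lub: "\<And>l. l \<in> L \<Longrightarrow> l \<le> (?r hi - ?r x0) / (hi - x0)"
    unfolding L_def using ccf_slope[OF f] assms fx0 by auto
  have bdd: "bdd_above L" unfolding bdd_above_def using Lub by blast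
  show ?thesis
  proof (intro conjI fx0 exI allI)
    fix t
    consider "t = x0" | "f t = \<infinity>" | "t < x0" "f t \<noteq> \<infinity>" | "t > x0" "f t \<noteq> \<infinity>" by fastforce
    then show "ereal (?r x0 + k * (t - x0)) \<le> f t"
    proof cases
      case 1 then show ?thesis using fx0 ccf_neg[OF f, of x0] by (cases "f x0") auto
    next
      case 2 then show ?thesis by simp
    next
      case 3
      have "(?r x0 - ?r t) / (x0 - t) \<in> L" unfolding L_def using 3 by auto
      then have "(?r x0 - ?r t) / (x0 - t) \<le> k" unfolding k_def using bdd by (rule cSup_upper)
      then have "?r x0 - ?r t \<le> k * (x0 - t)" using 3 by (simp add: field_simps)
      then have "?r x0 + k * (t - x0) \<le> ?r t" by (simp add: algebra_simps)
      then show ?thesis using 3(2) ccf_neg[OF f, of t] by (cases "f t") auto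
    next
      case 4
      have "k \<le> (?r t - ?r x0) / (t - x0)" unfolding k_def
        using Lne by (rule cSup_least) (use ccf_slope[OF f] 4 fx0 in \<open>auto simp: L_def\<close>)
      then have "k * (t - x0) \<le> ?r t - ?r x0" using 4 by (simp add: field_simps)
      then have "?r x0 + k * (t - x0) \<le> ?r t" by (simp add: algebra_simps)
      then show ?thesis using 4(2) ccf_neg[OF f, of t] by (cases "f t") auto
    qed
  qed
qed

lemma ccf_affine_minorant:
  assumes f: "closed_convex_fdiv_fun f"
  shows "\<exists>c k. \<forall>t. ereal (c + k * t) \<le> f t"
proof (cases "\<exists>lo hi. lo < hi \<and> f lo \<noteq> \<infinity> \<and> f hi \<noteq> \<infinity>")
  case True
  then obtain lo hi where h: "lo < hi" "f lo \<noteq> \<infinity>" "f hi \<noteq> \<infinity>" by blast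
  from ccf_subgrad[OF f, of lo "(lo+hi)/2" hi] h obtain k where
    "\<forall>t. ereal (real_of_ereal (f ((lo+hi)/2)) + k * (t - (lo+hi)/2)) \<le> f t" by auto
  then show ?thesis
    by (intro exI[of _ "real_of_ereal (f ((lo+hi)/2)) - k * ((lo+hi)/2)"] exI[of _ k])
       (auto simp: algebra_simps)
next
  case False
  have "f t \<ge> 0" for t
  proof (cases "t = 1")
    case True then show ?thesis using ccf_f1[OF f] by simp
  next
    case ne: False
    have "f 1 \<noteq> \<infinity>" using ccf_f1[OF f] by simp
    then have "f t = \<infinity>"
    proof (cases "t < 1")
      case True then show ?thesis using False \<open>f 1 \<noteq> \<infinity>\<close> by blast
    next
      case False': False
      then have "1 < t" using ne by simp
      then show ?thesis using False \<open>f 1 \<noteq> \<infinity>\<close> by blast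
    qed
    then show ?thesis by simp
  qed
  then show ?thesis by (intro exI[of _ 0]) (auto simp: zero_ereal_def)
qed

lemma ccf_measurable:
  assumes f: "closed_convex_fdiv_fun f"
  shows "f \<in> borel_measurable borel"
  unfolding borel_measurable_ereal_iff_Iio
proof
  fix a :: ereal
  have "is_interval (f -` {..<a})"
    unfolding is_interval_1
  proof (intro ballI allI impI)
    fix x y z assume xy: "x \<in> f -` {..<a}" "y \<in> f -` {..<a}" and z: "x \<le> z \<and> z \<le> y"
    show "z \<in> f -` {..<a}"
    proof (cases "x = y")
      case True then show ?thesis using xy z by auto
    next
      case False
      then have xy': "x < y" using z by auto
      define u where "u = (y - z) / (y - x)"
      have u: "0 \<le> u" "u \<le> 1" using z xy' by (auto simp: u_def)
      have ut: "u * (y - x) = y - z" using xy' by (simp add: u_def)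
      have ze: "z = u * x + (1 - u) * y" using ut by (simp add: algebra_simps)
      have fx: "f x \<noteq> \<infinity>" "f y \<noteq> \<infinity>" using xy by auto
      have "f z \<le> ereal (u * real_of_ereal (f x) + (1 - u) * real_of_ereal (f y))"
        unfolding ze by (rule ccf_conv[OF f u]) (rule ccf_fin[OF f], use fx in simp)+
      also have "\<dots> \<le> ereal (max (real_of_ereal (f x)) (real_of_ereal (f y)))"
      proof -
        define M where "M = max (real_of_ereal (f x)) (real_of_ereal (f y))"
        have "u * real_of_ereal (f x) \<le> u * M" using u by (intro mult_left_mono) (auto simp: M_def)
        moreover have "(1 - u) * real_of_ereal (f y) \<le> (1 - u) * M" using u by (intro mult_left_mono) (auto simp: M_def)
        moreover have "u * M + (1 - u) * M = M" by (simp add: algebra_simps)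
        ultimately show ?thesis unfolding M_def[symmetric] by simp
      qed
      also have "\<dots> < a" using xy fx ccf_neg[OF f, of x] ccf_neg[OF f, of y]
        by (cases "f x"; cases "f y") (auto simp: max_def)
      finally show ?thesis by simp
    qed
  qed
  then show "f -` {..<a} \<inter> space borel \<in> sets borel"
    by (simp add: real_interval_borel_measurable)
qed

lemma AE_pos_measure_ex:
  assumes "AE x in Q. x \<in> A \<longrightarrow> P x" "A \<in> sets Q" "measure Q A > 0"
  shows "\<exists>x\<in>A. P x"
proof (rule ccontr)
  assume "\<not> ?thesis"
  then have "AE x in Q. x \<notin> A" using assms(1) by (auto elim: AE_mp)
  then have "A \<in> null_sets Q" using AE_iff_null_sets[OF assms(2)] by simp
  then show False using assms(3) by (auto simp: measure_def null_sets_def)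
qed

lemma integrable_ind:
  fixes g :: "'a \<Rightarrow> real"
  shows "A \<in> sets M \<Longrightarrow> integrable M g \<Longrightarrow> integrable M (\<lambda>x. indicator A x * g x)"
  using integrable_mult_indicator[of A M g] by simp

lemma jensen_set:
  fixes Q :: "'a measure" and rr :: "'a \<Rightarrow> real"
  assumes f: "closed_convex_fdiv_fun f" and Q: "prob_space Q"
    and rr_int: "integrable Q rr"
    and fin: "AE x in Q. f (rr x) \<noteq> \<infinity>"
    and g_int: "integrable Q (\<lambda>x. real_of_ereal (f (rr x)))"
    and A: "A \<in> sets Q"
  shows "persp f (measure Q A) (\<integral>x. indicator A x * rr x \<partial>Q)
           \<le> ereal (\<integral>x. indicator A x * real_of_ereal (f (rr x)) \<partial>Q)"
proof -
  interpret Q: prob_space Q by fact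
  define G where "G x = real_of_ereal (f (rr x))" for x
  define \<beta> where "\<beta> = measure Q A"
  define z where "z = (\<integral>x. indicator A x * rr x \<partial>Q)"
  have finG: "AE x in Q. f (rr x) = ereal (G x)"
    using fin
  proof eventually_elim
    case (elim x)
    then show ?case using ccf_neg[OF f, of "rr x"] by (cases "f (rr x)") (auto simp: G_def)
  qed
  have iA: "integrable Q (\<lambda>x. indicator A x * rr x)"
    using rr_int A by (intro integrable_ind) auto
  have iG: "integrable Q (\<lambda>x. indicator A x * G x)"
    using g_int A unfolding G_def by (intro integrable_ind) auto
  have iAc: "integrable Q (\<lambda>x. indicator A x * c)" for c :: real
    using A by (intro integrable_ind) auto
  have intc: "(\<integral>x. indicator A x * c \<partial>Q) = \<beta> * c" for c :: real
    using A by (simp add: \<beta>_def)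
  show ?thesis
  proof (cases "\<beta> = 0")
    case True
    then have "A \<in> null_sets Q" using A Q.emeasure_eq_measure unfolding \<beta>_def by auto
    then have ae0: "AE x in Q. indicator A x = (0::real)" by (auto dest: AE_not_in)
    have "z = 0" unfolding z_def by (subst integral_cong_AE[where g="\<lambda>_. 0"]) (use ae0 iA in auto)
    moreover have "(\<integral>x. indicator A x * G x \<partial>Q) = 0"
      by (subst integral_cong_AE[where g="\<lambda>_. 0"]) (use ae0 iG in \<open>auto simp: G_def\<close>)
    ultimately show ?thesis using True unfolding G_def z_def \<beta>_def persp_def by simp
  next
    case False
    then have bpos: "\<beta> > 0" unfolding \<beta>_def by (simp add: zero_less_measure_iff)
    define x0 where "x0 = z / \<beta>"
    have zx0: "z = \<beta> * x0" using bpos by (simp add: x0_def)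
    have persp_eq: "persp f \<beta> z = ereal \<beta> * f x0" using bpos by (simp add: persp_def x0_def)
    show ?thesis
    proof (cases "(\<exists>lo<x0. f lo \<noteq> \<infinity>) \<and> (\<exists>hi>x0. f hi \<noteq> \<infinity>)")
      case True
      then obtain lo hi where lh: "lo < x0" "f lo \<noteq> \<infinity>" "x0 < hi" "f hi \<noteq> \<infinity>" by blast
      from ccf_subgrad[OF f lh(1) lh(3) lh(2) lh(4)] obtain k where
        fx0: "f x0 \<noteq> \<infinity>" and k: "\<And>t. ereal (real_of_ereal (f x0) + k * (t - x0)) \<le> f t" by blast
      have le: "AE x in Q. indicator A x * (real_of_ereal (f x0) + k * (rr x - x0)) \<le> indicator A x * G x"
        using finG
      proof eventually_elim
        case (elim x)
        have "real_of_ereal (f x0) + k * (rr x - x0) \<le> G x" using k[of "rr x"] elim by simp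
        then show ?case by (auto simp: indicator_def)
      qed
      have "(\<integral>x. indicator A x * (real_of_ereal (f x0) + k * (rr x - x0)) \<partial>Q) \<le> (\<integral>x. indicator A x * G x \<partial>Q)"
      proof (rule integral_mono_AE[OF _ iG le])
        have "(\<lambda>x. indicator A x * (real_of_ereal (f x0) + k * (rr x - x0))) =
              (\<lambda>x. indicator A x * (real_of_ereal (f x0) - k * x0) + k * (indicator A x * rr x))"
          by (auto simp: fun_eq_iff algebra_simps)
        moreover have "integrable Q (\<lambda>x. indicator A x * (real_of_ereal (f x0) - k * x0) + k * (indicator A x * rr x))"
          by (intro Bochner_Integration.integrable_add integrable_mult_right iAc iA)
        ultimately show "integrable Q (\<lambda>x. indicator A x * (real_of_ereal (f x0) + k * (rr x - x0)))"
          by simp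
      qed
      also have "(\<integral>x. indicator A x * (real_of_ereal (f x0) + k * (rr x - x0)) \<partial>Q) =
          (\<integral>x. indicator A x * (real_of_ereal (f x0) - k * x0) + k * (indicator A x * rr x) \<partial>Q)"
        by (intro Bochner_Integration.integral_cong) (auto simp: algebra_simps)
      also have "\<dots> = (\<integral>x. indicator A x * (real_of_ereal (f x0) - k * x0) \<partial>Q) + (\<integral>x. k * (indicator A x * rr x) \<partial>Q)"
        by (intro Bochner_Integration.integral_add integrable_mult_right iAc iA)
      also have "\<dots> = \<beta> * (real_of_ereal (f x0) - k * x0) + k * z"
        unfolding intc z_def by simp
      also have "\<dots> = \<beta> * real_of_ereal (f x0)" unfolding zx0 by (simp add: algebra_simps)
      finally have "\<beta> * real_of_ereal (f x0) \<le> (\<integral>x. indicator A x * G x \<partial>Q)" .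
      moreover obtain v where fv: "f x0 = ereal v" using fx0 ccf_neg[OF f, of x0] by (cases "f x0") auto
      ultimately have "persp f \<beta> z \<le> ereal (\<integral>x. indicator A x * G x \<partial>Q)"
        unfolding persp_eq by simp
      then show ?thesis unfolding G_def \<beta>_def z_def .
    next
      case False
      have eqAE: "AE x in Q. x \<in> A \<longrightarrow> rr x = x0"
      proof -
        from False consider "\<forall>lo<x0. f lo = \<infinity>" | "\<forall>hi>x0. f hi = \<infinity>" by auto
        then show ?thesis
        proof cases
          case 1
          have nn: "AE x in Q. 0 \<le> indicator A x * (rr x - x0)"
            using fin
          proof eventually_elim
            case (elim x)
            then have "\<not> rr x < x0" using 1 by auto
            then show ?case by (simp add: indicator_def)
          qed
          have ii: "integrable Q (\<lambda>x. indicator A x * (rr x - x0))"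
            using Bochner_Integration.integrable_diff[OF iA iAc[of x0]] by (simp add: right_diff_distrib)
          have "(\<integral>x. indicator A x * (rr x - x0) \<partial>Q) = (\<integral>x. indicator A x * rr x - indicator A x * x0 \<partial>Q)"
            by (simp add: right_diff_distrib)
          also have "\<dots> = z - \<beta> * x0"
            by (subst Bochner_Integration.integral_diff[OF iA iAc]) (simp only: intc z_def)
          finally have "(\<integral>x. indicator A x * (rr x - x0) \<partial>Q) = z - \<beta> * x0" .
          then have "(\<integral>x. indicator A x * (rr x - x0) \<partial>Q) = 0" using zx0 by simp
          then have "AE x in Q. indicator A x * (rr x - x0) = 0"
            using integral_nonneg_eq_0_iff_AE[OF ii nn] by simp
          then show ?thesis by eventually_elim (auto simp: indicator_def)
        next
          case 2
          have nn: "AE x in Q. 0 \<le> indicator A x * (x0 - rr x)"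
            using fin
          proof eventually_elim
            case (elim x)
            then have "\<not> rr x > x0" using 2 by auto
            then show ?case by (simp add: indicator_def)
          qed
          have ii: "integrable Q (\<lambda>x. indicator A x * (x0 - rr x))"
            using Bochner_Integration.integrable_diff[OF iAc[of x0] iA] by (simp add: right_diff_distrib)
          have "(\<integral>x. indicator A x * (x0 - rr x) \<partial>Q) = (\<integral>x. indicator A x * x0 - indicator A x * rr x \<partial>Q)"
            by (simp add: right_diff_distrib)
          also have "\<dots> = \<beta> * x0 - z"
            by (subst Bochner_Integration.integral_diff[OF iAc iA]) (simp only: intc z_def)
          finally have "(\<integral>x. indicator A x * (x0 - rr x) \<partial>Q) = \<beta> * x0 - z" .
          then have "(\<integral>x. indicator A x * (x0 - rr x) \<partial>Q) = 0" using zx0 by simp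
          then have "AE x in Q. indicator A x * (x0 - rr x) = 0"
            using integral_nonneg_eq_0_iff_AE[OF ii nn] by simp
          then show ?thesis by eventually_elim (auto simp: indicator_def)
        qed
      qed
      have ae2: "AE x in Q. x \<in> A \<longrightarrow> rr x = x0 \<and> f (rr x) = ereal (G x)"
        using eqAE finG by eventually_elim blast
      have "\<exists>x\<in>A. rr x = x0 \<and> f (rr x) = ereal (G x)"
        by (rule AE_pos_measure_ex[OF ae2 A]) (use bpos in \<open>simp only: \<beta>_def\<close>)
      then obtain x where x: "rr x = x0" "f (rr x) = ereal (G x)" by blast
      then have fx0: "f x0 = ereal (G x)" by simp
      have "AE x in Q. indicator A x * G x = indicator A x * real_of_ereal (f x0)"
        using eqAE
      proof eventually_elim
        case (elim y)
        then show ?case by (cases "y \<in> A") (simp_all add: G_def)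
      qed
      then have "(\<integral>x. indicator A x * G x \<partial>Q) = (\<integral>x. indicator A x * real_of_ereal (f x0) \<partial>Q)"
        by (intro integral_cong_AE borel_measurable_integrable[OF iG] borel_measurable_integrable[OF iAc])
      also have "\<dots> = \<beta> * real_of_ereal (f x0)" by (rule intc)
      finally have "(\<integral>x. indicator A x * G x \<partial>Q) = \<beta> * G x" unfolding fx0 by simp
      then have "persp f \<beta> z = ereal (\<integral>x. indicator A x * G x \<partial>Q)"
        unfolding persp_eq fx0 by simp
      then show ?thesis unfolding G_def \<beta>_def z_def by simp
    qed
  qed
qed

lemma fdiv_persp:
  fixes P Q :: "'a measure"
  assumes f: "closed_convex_fdiv_fun f" and Q: "prob_space Q" and P: "prob_space P"
    and sPQ: "sets P = sets Q" and ac: "absolutely_continuous Q P"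
    and fd: "fdiv f P Q \<le> ereal \<rho>" and A: "A \<in> sets Q"
  shows "persp f (measure Q A) (measure P A) + persp f (1 - measure Q A) (1 - measure P A) \<le> ereal \<rho>"
proof -
  interpret Q: prob_space Q by fact
  interpret P: prob_space P by fact
  define r where "r = RN_deriv Q P"
  define rr where "rr x = enn2real (r x)" for x
  have spPQ: "space P = space Q" using sPQ by (rule sets_eq_imp_space_eq)
  have dens: "density Q r = P" unfolding r_def by (rule Q.density_RN_deriv[OF ac sPQ])
  have rm[measurable]: "r \<in> borel_measurable Q" unfolding r_def by simp
  have rrm[measurable]: "rr \<in> borel_measurable Q" unfolding rr_def[abs_def] by measurable
  have rfin: "AE x in Q. r x \<noteq> \<infinity>" unfolding r_def
    by (rule Q.RN_deriv_finite[OF _ ac sPQ]) unfold_locales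
  have r_eq: "AE x in Q. r x = ennreal (rr x)"
    using rfin by eventually_elim (simp add: rr_def less_top)
  have rr_nn: "0 \<le> rr x" for x unfolding rr_def by simp
  have emP: "emeasure P B = (\<integral>\<^sup>+x. ennreal (indicator B x * rr x) \<partial>Q)" if B: "B \<in> sets Q" for B
  proof -
    have "emeasure P B = (\<integral>\<^sup>+x. r x * indicator B x \<partial>Q)"
      unfolding dens[symmetric] using B by (simp add: emeasure_density)
    also have "\<dots> = (\<integral>\<^sup>+x. ennreal (indicator B x * rr x) \<partial>Q)"
      using r_eq by (intro nn_integral_cong_AE) (auto elim!: eventually_mono simp: indicator_def)
    finally show ?thesis .
  qed
  have rr_int: "integrable Q rr"
  proof (rule integrableI_nonneg)
    have "(\<integral>\<^sup>+x. ennreal (rr x) \<partial>Q) = (\<integral>\<^sup>+x. ennreal (indicator (space Q) x * rr x) \<partial>Q)"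
      by (intro nn_integral_cong) (simp add: indicator_def)
    also have "\<dots> = emeasure P (space Q)" by (simp add: emP)
    also have "\<dots> = 1" using P.emeasure_space_1 spPQ by simp
    finally show "(\<integral>\<^sup>+x. ennreal (rr x) \<partial>Q) < \<infinity>" by simp
  qed (auto simp: rr_nn)
  have mP: "measure P B = (\<integral>x. indicator B x * rr x \<partial>Q)" if B: "B \<in> sets Q" for B
  proof -
    have "emeasure P B = ennreal (\<integral>x. indicator B x * rr x \<partial>Q)"
      unfolding emP[OF B] by (intro nn_integral_eq_integral integrable_ind B rr_int) (auto simp: rr_nn)
    then show ?thesis unfolding measure_def
      by (simp add: integral_nonneg_AE rr_nn)
  qed
  define Pos where "Pos = (\<integral>\<^sup>+x. e2ennreal (max 0 (f (rr x))) \<partial>Q)"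
  define Neg where "Neg = (\<integral>\<^sup>+x. e2ennreal (max 0 (- f (rr x))) \<partial>Q)"
  have fd': "enn2ereal Pos - enn2ereal Neg \<le> ereal \<rho>"
    using fd unfolding fdiv_def Pos_def Neg_def r_def rr_def .
  have fm[measurable]: "(\<lambda>x. f (rr x)) \<in> borel_measurable Q"
    by (rule measurable_compose[OF rrm ccf_measurable[OF f]])
  have Pos_fin: "Pos \<noteq> \<infinity>"
  proof
    assume "Pos = \<infinity>"
    then have "enn2ereal Pos = \<infinity>" by simp
    then show False using fd' by (cases "enn2ereal Neg") auto
  qed
  have fin: "AE x in Q. f (rr x) \<noteq> \<infinity>"
  proof -
    have "AE x in Q. e2ennreal (max 0 (f (rr x))) \<noteq> \<infinity>"
      by (rule nn_integral_noteq_infinite) (use Pos_fin in \<open>simp_all add: Pos_def\<close>)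
    then show ?thesis by eventually_elim auto
  qed
  define G where "G x = real_of_ereal (f (rr x))" for x
  have Gm[measurable]: "G \<in> borel_measurable Q" unfolding G_def[abs_def] by measurable
  have finG: "AE x in Q. f (rr x) = ereal (G x)"
    using fin
  proof eventually_elim
    case (elim x)
    then show ?case using ccf_neg[OF f, of "rr x"] by (cases "f (rr x)") (auto simp: G_def)
  qed
  obtain c k where ck: "\<And>t. ereal (c + k * t) \<le> f t" using ccf_affine_minorant[OF f] by blast
  have Pos_eq: "Pos = (\<integral>\<^sup>+x. ennreal (max 0 (G x)) \<partial>Q)"
    unfolding Pos_def using finG
    by (intro nn_integral_cong_AE) (auto elim!: eventually_mono simp: max_def zero_ereal_def)
  have Neg_eq: "Neg = (\<integral>\<^sup>+x. ennreal (max 0 (- G x)) \<partial>Q)"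
    unfolding Neg_def using finG
    by (intro nn_integral_cong_AE) (auto elim!: eventually_mono simp: max_def zero_ereal_def)
  have pos_int: "integrable Q (\<lambda>x. max 0 (G x))"
  proof (rule integrableI_nonneg)
    show "(\<integral>\<^sup>+x. ennreal (max 0 (G x)) \<partial>Q) < \<infinity>"
      using Pos_fin unfolding Pos_eq by (simp add: less_top)
  qed auto
  have neg_int: "integrable Q (\<lambda>x. max 0 (- G x))"
  proof (rule Bochner_Integration.integrable_bound[where f="\<lambda>x. \<bar>c\<bar> + \<bar>k\<bar> * rr x"])
    show "integrable Q (\<lambda>x. \<bar>c\<bar> + \<bar>k\<bar> * rr x)"
      by (intro Bochner_Integration.integrable_add Q.integrable_const integrable_mult_right rr_int)
    show "AE x in Q. norm (max 0 (- G x)) \<le> norm (\<bar>c\<bar> + \<bar>k\<bar> * rr x)"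
      using finG
    proof eventually_elim
      case (elim x)
      have "ereal (c + k * rr x) \<le> ereal (G x)" using ck[of "rr x"] elim by simp
      then have "c + k * rr x \<le> G x" by simp
      moreover have "- (k * rr x) \<le> \<bar>k\<bar> * rr x" using rr_nn[of x]
        by (metis abs_ge_minus_self abs_mult abs_of_nonneg abs_minus_cancel mult_minus_left)
      ultimately have "- G x \<le> \<bar>c\<bar> + \<bar>k\<bar> * rr x" by linarith
      moreover have "0 \<le> \<bar>c\<bar> + \<bar>k\<bar> * rr x" using rr_nn[of x] by simp
      ultimately show ?case by simp
    qed
  qed simp
  have G_split: "G x = max 0 (G x) - max 0 (- G x)" for x by (simp add: max_def)
  have G_int: "integrable Q G"
    by (subst G_split[abs_def]) (intro Bochner_Integration.integrable_diff pos_int neg_int)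
  have "enn2ereal Pos - enn2ereal Neg = ereal (\<integral>x. G x \<partial>Q)"
  proof -
    have "Pos = ennreal (\<integral>x. max 0 (G x) \<partial>Q)"
      unfolding Pos_eq by (intro nn_integral_eq_integral pos_int) auto
    moreover have "Neg = ennreal (\<integral>x. max 0 (- G x) \<partial>Q)"
      unfolding Neg_eq by (intro nn_integral_eq_integral neg_int) auto
    moreover have "(\<integral>x. G x \<partial>Q) = (\<integral>x. max 0 (G x) \<partial>Q) - (\<integral>x. max 0 (- G x) \<partial>Q)"
      by (subst G_split) (rule Bochner_Integration.integral_diff[OF pos_int neg_int])
    moreover have "0 \<le> (\<integral>x. max 0 (G x) \<partial>Q)" "0 \<le> (\<integral>x. max 0 (- G x) \<partial>Q)"
      by (auto intro: integral_nonneg_AE)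
    ultimately show ?thesis by simp
  qed
  with fd' have intG: "(\<integral>x. G x \<partial>Q) \<le> \<rho>" by simp
  define Ac where "Ac = space Q - A"
  have Ac: "Ac \<in> sets Q" using A by (auto simp: Ac_def)
  have split: "(\<integral>x. G x \<partial>Q) = (\<integral>x. indicator A x * G x \<partial>Q) + (\<integral>x. indicator Ac x * G x \<partial>Q)"
  proof -
    have "(\<integral>x. indicator A x * G x \<partial>Q) + (\<integral>x. indicator Ac x * G x \<partial>Q) =
          (\<integral>x. indicator A x * G x + indicator Ac x * G x \<partial>Q)"
      by (rule Bochner_Integration.integral_add[symmetric]) (intro integrable_ind A Ac G_int)+
    also have "\<dots> = (\<integral>x. G x \<partial>Q)"
      by (intro Bochner_Integration.integral_cong) (auto simp: Ac_def indicator_def)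
    finally show ?thesis by simp
  qed
  have J1: "persp f (measure Q A) (\<integral>x. indicator A x * rr x \<partial>Q) \<le> ereal (\<integral>x. indicator A x * G x \<partial>Q)"
    unfolding G_def by (rule jensen_set[OF f Q rr_int fin _ A]) (use G_int in \<open>simp add: G_def[abs_def]\<close>)
  have J2: "persp f (measure Q Ac) (\<integral>x. indicator Ac x * rr x \<partial>Q) \<le> ereal (\<integral>x. indicator Ac x * G x \<partial>Q)"
    unfolding G_def by (rule jensen_set[OF f Q rr_int fin _ Ac]) (use G_int in \<open>simp add: G_def[abs_def]\<close>)
  have e1: "measure Q Ac = 1 - measure Q A" unfolding Ac_def by (rule Q.prob_compl[OF A])
  have e2: "(\<integral>x. indicator A x * rr x \<partial>Q) = measure P A" using mP[OF A] by simp
  have e3: "(\<integral>x. indicator Ac x * rr x \<partial>Q) = 1 - measure P A"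
  proof -
    have "A \<in> sets P" using A sPQ by simp
    then have "measure P (space P - A) = 1 - measure P A" by (rule P.prob_compl)
    then show ?thesis using mP[OF Ac] spPQ by (simp add: Ac_def)
  qed
  have "persp f (measure Q A) (measure P A) + persp f (1 - measure Q A) (1 - measure P A)
        \<le> ereal (\<integral>x. indicator A x * G x \<partial>Q) + ereal (\<integral>x. indicator Ac x * G x \<partial>Q)"
    using J1 J2 unfolding e1 e2 e3 by (rule add_mono)
  also have "\<dots> = ereal (\<integral>x. G x \<partial>Q)" unfolding split by simp
  also have "\<dots> \<le> ereal \<rho>" using intG by simp
  finally show ?thesis .
qed

lemma persp_diag:
  assumes f: "closed_convex_fdiv_fun f" and b: "0 \<le> \<beta>" "\<beta> \<le> 1"
  shows "persp f \<beta> \<beta> + persp f (1 - \<beta>) (1 - \<beta>) = 0"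
proof -
  have f1: "f 1 = 0" by (rule ccf_f1[OF f])
  have p: "persp f x x = 0" for x
    by (cases "x = 0") (simp_all add: persp_def f1)
  show ?thesis by (simp add: p)
qed

lemma g_fr_bounds:
  assumes f: "closed_convex_fdiv_fun f" and \<rho>: "0 \<le> \<rho>" and b: "0 \<le> \<beta>" "\<beta> \<le> 1"
  shows "0 \<le> g_fr f \<rho> \<beta>" "g_fr f \<rho> \<beta> \<le> \<beta>"
proof -
  define Z where "Z = {z \<in> {0..1}. persp f \<beta> z + persp f (1 - \<beta>) (1 - z) \<le> ereal \<rho>}"
  have bZ: "\<beta> \<in> Z" unfolding Z_def using persp_diag[OF f b] b \<rho> by (simp add: zero_ereal_def)
  have bdd: "bdd_below Z" unfolding Z_def by (rule bdd_belowI[of _ 0]) auto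
  show "g_fr f \<rho> \<beta> \<le> \<beta>" unfolding g_fr_def Z_def[symmetric] by (rule cInf_lower[OF bZ bdd])
  show "0 \<le> g_fr f \<rho> \<beta>" unfolding g_fr_def Z_def[symmetric]
    by (rule cInf_greatest) (use bZ in \<open>auto simp: Z_def\<close>)
qed

lemma g_fr_le:
  assumes "z \<in> {0..1}" "persp f \<beta> z + persp f (1 - \<beta>) (1 - z) \<le> ereal \<rho>"
  shows "g_fr f \<rho> \<beta> \<le> z"
  unfolding g_fr_def
  by (rule cInf_lower) (use assms in \<open>auto intro: bdd_belowI[of _ 0]\<close>)

lemma g_fr_inv_props:
  assumes f: "closed_convex_fdiv_fun f" and \<rho>: "0 \<le> \<rho>" and \<tau>: "0 \<le> \<tau>"
  shows "0 \<le> g_fr_inv f \<rho> \<tau>" "g_fr_inv f \<rho> \<tau> \<le> 1"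
    and "\<And>\<beta>. 0 \<le> \<beta> \<Longrightarrow> \<beta> \<le> 1 \<Longrightarrow> g_fr f \<rho> \<beta> \<le> \<tau> \<Longrightarrow> \<beta> \<le> g_fr_inv f \<rho> \<tau>"
proof -
  define B where "B = {\<beta> \<in> {0..1}. g_fr f \<rho> \<beta> \<le> \<tau>}"
  have "g_fr f \<rho> 0 \<le> 0" using g_fr_bounds[OF f \<rho>, of 0] by simp
  then have B0: "0 \<in> B" unfolding B_def using \<tau> by simp
  have bdd: "bdd_above B" unfolding B_def by (rule bdd_aboveI[of _ 1]) auto
  show "0 \<le> g_fr_inv f \<rho> \<tau>" unfolding g_fr_inv_def B_def[symmetric] by (rule cSup_upper[OF B0 bdd])
  show "g_fr_inv f \<rho> \<tau> \<le> 1" unfolding g_fr_inv_def B_def[symmetric]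
  proof (rule cSup_least)
    show "B \<noteq> {}" using B0 by auto
  next
    fix x assume "x \<in> B" then show "x \<le> 1" by (simp add: B_def)
  qed
  show "\<beta> \<le> g_fr_inv f \<rho> \<tau>" if "0 \<le> \<beta>" "\<beta> \<le> 1" "g_fr f \<rho> \<beta> \<le> \<tau>" for \<beta>
    unfolding g_fr_inv_def B_def[symmetric] by (rule cSup_upper[OF _ bdd]) (use that in \<open>simp add: B_def\<close>)
qed

lemma emp_cdf_ge_iff:
  assumes "0 < k"
  shows "c \<le> emp_cdf w k x \<longleftrightarrow> c * real k \<le> (\<Sum>j<k. if w j \<le> x then 1 else 0)"
proof -
  have "(\<Sum>j<k. indicator {..x} (w j)) = (\<Sum>j<k. if w j \<le> x then 1 else (0::real))"
    by (intro sum.cong) (auto simp: indicator_def)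
  then have "emp_cdf w k x = (\<Sum>j<k. if w j \<le> x then 1 else 0) / real k"
    unfolding emp_cdf_def by simp
  then show ?thesis using assms by (simp add: le_divide_eq)
qed

lemma quant_char:
  fixes w :: "nat \<Rightarrow> nat \<Rightarrow> real" and m :: "nat \<Rightarrow> nat"
  assumes d: "d \<ge> 1" and m: "\<forall>i<d. m i > 0" and c: "0 < c" "c \<le> 1"
  shows "v \<le> quantile c (\<lambda>x. Min ((\<lambda>i. emp_cdf (w i) (m i) x) ` {..<d})) \<longleftrightarrow>
         (\<exists>i<d. (\<Sum>j<m i. if w i j < v then 1 else 0) < c * real (m i))"
proof -
  define F where "F x = Min ((\<lambda>i. emp_cdf (w i) (m i) x) ` {..<d})" for x
  define S where "S = {q. c \<le> F q}"
  have Fge: "c \<le> F q \<longleftrightarrow> (\<forall>i<d. c * real (m i) \<le> (\<Sum>j<m i. if w i j \<le> q then 1 else 0))" for q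
  proof -
    have "c \<le> F q \<longleftrightarrow> (\<forall>i<d. c \<le> emp_cdf (w i) (m i) q)"
      unfolding F_def using d by (subst Min_ge_iff) (auto simp: lessThan_empty_iff)
    also have "\<dots> \<longleftrightarrow> (\<forall>i<d. c * real (m i) \<le> (\<Sum>j<m i. if w i j \<le> q then 1 else 0))"
      using m emp_cdf_ge_iff by auto
    finally show ?thesis .
  qed
  define P where "P = Sigma {..<d} (\<lambda>i. {..<m i})"
  have finP: "finite P" unfolding P_def by auto
  have "(0, 0) \<in> P" unfolding P_def using d m by auto
  then have P0: "P \<noteq> {}" by auto
  define q0 where "q0 = Max ((\<lambda>(i, j). w i j) ` P)"
  define q1 where "q1 = Min ((\<lambda>(i, j). w i j) ` P)"
  have q0: "w i j \<le> q0" if "i < d" "j < m i" for i j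
    unfolding q0_def using finP that by (intro Max_ge) (auto simp: P_def)
  have q1: "q1 \<le> w i j" if "i < d" "j < m i" for i j
    unfolding q1_def using finP that by (intro Min_le) (auto simp: P_def)
  have Sne: "S \<noteq> {}"
  proof -
    have "q0 \<in> S" unfolding S_def mem_Collect_eq Fge
    proof (intro allI impI)
      fix i assume i: "i < d"
      have "(\<Sum>j<m i. if w i j \<le> q0 then 1 else 0) = (\<Sum>j<m i. 1::real)"
        using q0[OF i] by (intro sum.cong) auto
      moreover have "c * real (m i) \<le> 1 * real (m i)" using c by (intro mult_right_mono) auto
      ultimately show "c * real (m i) \<le> (\<Sum>j<m i. if w i j \<le> q0 then 1 else 0)" by simp
    qed
    then show ?thesis by auto
  qed
  have Sbdd: "bdd_below S"
  proof (rule bdd_belowI[of _ q1])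
    fix q assume "q \<in> S"
    then have h: "c * real (m 0) \<le> (\<Sum>j<m 0. if w 0 j \<le> q then 1 else 0)" unfolding S_def Fge using d by auto
    show "q1 \<le> q"
    proof (rule ccontr)
      assume "\<not> q1 \<le> q"
      then have "(\<Sum>j<m 0. if w 0 j \<le> q then 1 else 0) = (\<Sum>j<m 0. 0::real)"
        using q1[of 0] d by (intro sum.cong) fastforce+
      moreover have "0 < m 0" using m d by auto
      moreover have "0 < c * real (m 0)" using c calculation(2) by simp
      ultimately show False using h by simp
    qed
  qed
  have "v \<le> quantile c F \<longleftrightarrow> (\<forall>q\<in>S. v \<le> q)"
    unfolding quantile_def S_def[symmetric] by (rule le_cInf_iff[OF Sne Sbdd])
  also have "\<dots> \<longleftrightarrow> (\<exists>i<d. (\<Sum>j<m i. if w i j < v then 1 else 0) < c * real (m i))"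
  proof
    assume all: "\<forall>q\<in>S. v \<le> q"
    show "\<exists>i<d. (\<Sum>j<m i. if w i j < v then 1 else 0) < c * real (m i)"
    proof (rule ccontr)
      assume "\<not> ?thesis"
      then have ge: "\<forall>i<d. c * real (m i) \<le> (\<Sum>j<m i. if w i j < v then 1 else 0)" using not_less by blast
      define T where "T = insert (v - 1) ((\<lambda>(i, j). w i j) ` {p \<in> P. w (fst p) (snd p) < v})"
      define q where "q = Max T"
      have finT: "finite T" unfolding T_def using finP by auto
      have qlt: "q < v" unfolding q_def using finT by (subst Max_less_iff) (auto simp: T_def)
      have eq: "(if w i j \<le> q then 1 else 0) = (if w i j < v then 1 else (0::real))" if "i < d" "j < m i" for i j
      proof (cases "w i j < v")
        case True
        then have "w i j \<in> T" unfolding T_def using that by (force simp: P_def)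
        then have "w i j \<le> q" unfolding q_def using finT by (rule Max_ge[rotated])
        then show ?thesis using True by simp
      next
        case False
        then show ?thesis using qlt by auto
      qed
      have "q \<in> S" unfolding S_def mem_Collect_eq Fge
      proof (intro allI impI)
        fix i assume i: "i < d"
        have "(\<Sum>j<m i. if w i j \<le> q then 1 else 0) = (\<Sum>j<m i. if w i j < v then 1 else (0::real))"
          using eq[OF i] by (intro sum.cong) auto
        then show "c * real (m i) \<le> (\<Sum>j<m i. if w i j \<le> q then 1 else 0)" using ge i by simp
      qed
      then have "v \<le> q" using all by blast
      then show False using qlt by simp
    qed
  next
    assume "\<exists>i<d. (\<Sum>j<m i. if w i j < v then 1 else 0) < c * real (m i)"
    then obtain i where i: "i < d" and lt: "(\<Sum>j<m i. if w i j < v then 1 else 0) < c * real (m i)" by blast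
    show "\<forall>q\<in>S. v \<le> q"
    proof (intro ballI, rule ccontr)
      fix q assume qS: "q \<in> S" and "\<not> v \<le> q"
      then have qv: "q < v" by simp
      have "(\<Sum>j<m i. if w i j \<le> q then 1 else 0) \<le> (\<Sum>j<m i. if w i j < v then 1 else (0::real))"
        using qv by (intro sum_mono) auto
      moreover have "c * real (m i) \<le> (\<Sum>j<m i. if w i j \<le> q then 1 else 0)"
        using qS i unfolding S_def Fge by auto
      ultimately show False using lt by simp
    qed
  qed
  finally show ?thesis unfolding F_def .
qed

lemma quantile_point:
  assumes D: "real_distribution \<mu>" and L: "0 < L" "L < 1"
  shows "\<exists>a. L \<le> measure \<mu> {..a} \<and> measure \<mu> {..<a} \<le> L"
proof -
  interpret real_distribution \<mu> by fact
  define A where "A = {x. L \<le> cdf \<mu> x}"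
  have "eventually (\<lambda>x. L < cdf \<mu> x) at_top"
    by (rule order_tendstoD(1)[OF cdf_lim_at_top_prob L(2)])
  then obtain N1 where "\<forall>x\<ge>N1. L < cdf \<mu> x" by (auto simp: eventually_at_top_linorder)
  then have Ane: "A \<noteq> {}" unfolding A_def by (auto intro!: exI[of _ N1])
  have "eventually (\<lambda>x. cdf \<mu> x < L) at_bot"
    by (rule order_tendstoD(2)[OF cdf_lim_at_bot L(1)])
  then obtain N0 where N0: "\<forall>x\<le>N0. cdf \<mu> x < L" by (auto simp: eventually_at_bot_linorder)
  have Abdd: "bdd_below A"
  proof (rule bdd_belowI[of _ N0])
    fix x assume x: "x \<in> A"
    show "N0 \<le> x"
    proof (rule ccontr)
      assume "\<not> N0 \<le> x"
      then have "cdf \<mu> x < L" using N0 by simp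
      then show False using x unfolding A_def by simp
    qed
  qed
  define a where "a = Inf A"
  have below: "cdf \<mu> x < L" if "x < a" for x
  proof (rule ccontr)
    assume "\<not> cdf \<mu> x < L"
    then have "x \<in> A" unfolding A_def by simp
    then have "a \<le> x" unfolding a_def by (rule cInf_lower[OF _ Abdd])
    then show False using that by simp
  qed
  have ge: "L \<le> cdf \<mu> a"
  proof (rule tendsto_lowerbound)
    show "(cdf \<mu> \<longlongrightarrow> cdf \<mu> a) (at_right a)"
      using cdf_is_right_cont[of a] by (simp add: continuous_within)
    show "eventually (\<lambda>y. L \<le> cdf \<mu> y) (at_right a)"
      using eventually_at_right_less[of a]
    proof eventually_elim
      case (elim y)
      then have "Inf A < y" unfolding a_def .
      then obtain x where "x \<in> A" "x < y" using cInf_less_iff[OF Ane Abdd] by blast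
      then show ?case unfolding A_def using cdf_nondecreasing[of x y] by simp
    qed
  qed simp
  have lt: "measure \<mu> {..<a} \<le> L"
  proof -
    define B where "B n = {..a - 1 / real (Suc n)}" for n
    have "(\<lambda>n. measure \<mu> (B n)) \<longlonglongrightarrow> measure \<mu> (\<Union>n. B n)"
    proof (rule finite_Lim_measure_incseq)
      show "range B \<subseteq> sets \<mu>" by (auto simp: B_def)
      show "incseq B" unfolding incseq_def B_def
      proof (intro allI impI subsetI)
        fix m n :: nat and x assume mn: "m \<le> n" and x: "x \<in> {..a - 1 / real (Suc m)}"
        have "1 / real (Suc n) \<le> 1 / real (Suc m)" using mn by (intro divide_left_mono) auto
        then show "x \<in> {..a - 1 / real (Suc n)}" using x by auto
      qed
    qed
    moreover have "(\<Union>n. B n) = {..<a}"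
    proof (intro equalityI subsetI)
      fix x assume "x \<in> (\<Union>n. B n)"
      then obtain n where "x \<le> a - 1 / real (Suc n)" by (auto simp: B_def)
      moreover have "0 < 1 / real (Suc n)" by simp
      ultimately have "x < a" by linarith
      then show "x \<in> {..<a}" by simp
    next
      fix x assume "x \<in> {..<a}"
      then have "0 < a - x" by simp
      from reals_Archimedean[OF this] obtain n where "inverse (real (Suc n)) < a - x" by blast
      then have "x \<le> a - 1 / real (Suc n)" by (simp add: field_simps)
      then show "x \<in> (\<Union>n. B n)" by (auto simp: B_def)
    qed
    ultimately have lim: "(\<lambda>n. measure \<mu> (B n)) \<longlonglongrightarrow> measure \<mu> {..<a}" by simp
    have "measure \<mu> (B n) \<le> L" for n
    proof -
      have "measure \<mu> (B n) = cdf \<mu> (a - 1 / real (Suc n))" by (simp add: B_def cdf_def)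
      also have "\<dots> < L" by (rule below) simp
      finally show ?thesis by simp
    qed
    then show ?thesis using LIMSEQ_le_const2[OF lim] by blast
  qed
  show ?thesis using ge lt by (auto simp: cdf_def)
qed

theorem corollary9:
  fixes MX :: "'x measure" and MY :: "'y measure" and s :: "'x \<times> 'y \<Rightarrow> real"
    and S :: "nat \<Rightarrow> ('x \<times> 'y) measure" and d :: nat
    and f :: "real \<Rightarrow> ereal" and \<rho> \<alpha> \<epsilon> :: real
    and M :: "'o measure" and m :: "nat \<Rightarrow> nat"
    and X :: "nat \<Rightarrow> nat \<Rightarrow> 'o \<Rightarrow> 'x" and Y :: "nat \<Rightarrow> nat \<Rightarrow> 'o \<Rightarrow> 'y"
    and Xn :: "'o \<Rightarrow> 'x" and Yn :: "'o \<Rightarrow> 'y" and \<alpha>' :: real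
  defines "I \<equiv> {(i, j). i < d \<and> j < m i}"
    and "t \<equiv> \<lambda>\<omega>. quantile (g_fr_inv f \<rho> (1 - \<alpha>'))
                  (\<lambda>x. Min ((\<lambda>i. emp_cdf (\<lambda>j. s (X i j \<omega>, Y i j \<omega>)) (m i) x) ` {..<d}))"
  assumes alpha'_def: "\<alpha>' = 1 - g_fr f \<rho> (\<epsilon> + g_fr_inv f \<rho>
                  ((1 - \<alpha>) / (1 - 2 * (\<Sum>i<d. exp (- 2 * real (m i) * \<epsilon>\<^sup>2)))))"
    and s_meas: "s \<in> borel_measurable (MX \<Otimes>\<^sub>M MY)"
    and d_pos: "d \<ge> 1"
    and S_dist: "\<forall>i<d. prob_space (S i) \<and> sets (S i) = sets (MX \<Otimes>\<^sub>M MY)"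
    and f_ok: "closed_convex_fdiv_fun f"
    and rho_pos: "\<rho> > 0"
    and alpha: "0 < \<alpha>" "\<alpha> < 1"
    and M_prob: "prob_space M"
    and m_pos: "\<forall>i<d. m i > 0"
    and samples_dist: "\<forall>i<d. \<forall>j<m i. (\<lambda>\<omega>. (X i j \<omega>, Y i j \<omega>)) \<in> M \<rightarrow>\<^sub>M MX \<Otimes>\<^sub>M MY
                   \<and> distr M (MX \<Otimes>\<^sub>M MY) (\<lambda>\<omega>. (X i j \<omega>, Y i j \<omega>)) = S i"
    and samples_indep: "\<forall>i<d. prob_space.indep_vars M (\<lambda>_. MX \<Otimes>\<^sub>M MY)
                                 (\<lambda>j \<omega>. (X i j \<omega>, Y i j \<omega>)) {..<m i}"
    and test_meas: "Xn \<in> M \<rightarrow>\<^sub>M MX" "Yn \<in> M \<rightarrow>\<^sub>M MY"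
    and test_dist: "distr M borel (\<lambda>\<omega>. s (Xn \<omega>, Yn \<omega>)) \<in> Pfr f \<rho> s S d"
    and test_indep: "prob_space.indep_set M
                       (sets (vimage_algebra (space M) (\<lambda>\<omega>. s (Xn \<omega>, Yn \<omega>)) borel))
                       (sets (vimage_algebra (space M) (\<lambda>\<omega>. \<lambda>p\<in>I. s (X (fst p) (snd p) \<omega>, Y (fst p) (snd p) \<omega>))
                                (\<Pi>\<^sub>M p\<in>I. borel)))"
    and eps_pos: "\<epsilon> > 0"
    and well_def1: "1 - 2 * (\<Sum>i<d. exp (- 2 * real (m i) * \<epsilon>\<^sup>2)) > 0"
    and well_def2: "\<epsilon> + g_fr_inv f \<rho>
                  ((1 - \<alpha>) / (1 - 2 * (\<Sum>i<d. exp (- 2 * real (m i) * \<epsilon>\<^sup>2)))) \<le> 1"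
  shows "measure M {\<omega> \<in> space M. Yn \<omega> \<in> {y \<in> space MY. s (Xn \<omega>, y) \<le> t \<omega>}} \<ge> 1 - \<alpha>"
proof -
  interpret M: prob_space M by (rule M_prob)
  define V where "V = (\<lambda>\<omega>. s (Xn \<omega>, Yn \<omega>))"
  define W where "W = (\<lambda>i j \<omega>. s (X i j \<omega>, Y i j \<omega>))"
  define Es where "Es = (\<Sum>i<d. exp (- 2 * real (m i) * \<epsilon>\<^sup>2))"
  define den where "den = 1 - 2 * Es"
  define \<tau> where "\<tau> = (1 - \<alpha>) / den"
  define b where "b = g_fr_inv f \<rho> \<tau>"
  define c where "c = g_fr_inv f \<rho> (1 - \<alpha>')"
  have den_pos: "0 < den" using well_def1 by (simp add: den_def Es_def)
  have tau_pos: "0 < \<tau>" using alpha den_pos by (simp add: \<tau>_def)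
  have rho0: "0 \<le> \<rho>" using rho_pos by simp
  note ginv = g_fr_inv_props[OF f_ok rho0]
  have b01: "0 \<le> b" "b \<le> 1" using ginv(1,2)[of \<tau>] tau_pos by (simp_all add: b_def)
  have beps: "\<epsilon> + b \<le> 1" using well_def2 by (simp add: b_def \<tau>_def den_def Es_def)
  have a'eq: "1 - \<alpha>' = g_fr f \<rho> (\<epsilon> + b)" using alpha'_def by (simp add: b_def \<tau>_def den_def Es_def)
  have geb: "0 \<le> g_fr f \<rho> (\<epsilon> + b)" "g_fr f \<rho> (\<epsilon> + b) \<le> \<epsilon> + b"
    using g_fr_bounds[OF f_ok rho0, of "\<epsilon> + b"] eps_pos b01 beps by simp_all
  have c_ge: "\<epsilon> + b \<le> c" unfolding c_def
    by (rule ginv(3)) (use geb a'eq eps_pos b01 beps in auto)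
  have c_le: "c \<le> 1" unfolding c_def by (rule ginv(2)) (use geb a'eq in simp)
  have c_pos: "0 < c" using c_ge eps_pos b01 by simp

  define K where "K = (\<Sum>i<d. real (m i))"
  have m0d: "0 < d" using d_pos by simp
  have mleK: "real (m i) \<le> K" if "i < d" for i
    unfolding K_def using that by (intro member_le_sum) auto
  have K1: "1 \<le> K" using mleK[OF m0d] m_pos m0d by force
  define \<delta> where "\<delta> = min (\<epsilon> / 2) (1 / (8 * \<epsilon> * K))"
  have \<delta>pos: "0 < \<delta>" using eps_pos K1 by (simp add: \<delta>_def)
  have \<delta>le: "\<delta> \<le> \<epsilon> / 2" "\<delta> \<le> 1 / (8 * \<epsilon> * K)" by (simp_all add: \<delta>_def)
  define L where "L = b + \<delta>"
  have L: "0 < L" "L < 1" using \<delta>pos \<delta>le b01 beps eps_pos by (simp_all add: L_def)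

  have XYm: "(\<lambda>\<omega>. (X i j \<omega>, Y i j \<omega>)) \<in> M \<rightarrow>\<^sub>M MX \<Otimes>\<^sub>M MY" if "i < d" "j < m i" for i j
    using samples_dist that by blast
  have Wm: "W i j \<in> borel_measurable M" if "i < d" "j < m i" for i j
    unfolding W_def by (rule measurable_compose[OF XYm[OF that] s_meas])
  have Vm: "V \<in> borel_measurable M"
    unfolding V_def by (rule measurable_compose[OF measurable_Pair[OF test_meas] s_meas])
  define \<mu> where "\<mu> = (\<lambda>i. distr (S i) borel s)"
  have sS: "s \<in> borel_measurable (S i)" if "i < d" for i
  proof -
    have "sets (S i) = sets (MX \<Otimes>\<^sub>M MY)" using S_dist that by simp
    then have eq: "measurable (S i) borel = measurable (MX \<Otimes>\<^sub>M MY) borel" by (rule measurable_cong_sets) simp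
    show ?thesis by (subst eq) (rule s_meas)
  qed
  have \<mu>rd: "real_distribution (\<mu> i)" if "i < d" for i
  proof -
    interpret Si: prob_space "S i" using S_dist that by simp
    show ?thesis unfolding real_distribution_def real_distribution_axioms_def \<mu>_def
      using Si.prob_space_distr[OF sS[OF that]] by simp
  qed
  have distW: "distr M borel (W i j) = \<mu> i" if "i < d" "j < m i" for i j
  proof -
    have "distr M borel (W i j) = distr M borel (s \<circ> (\<lambda>\<omega>. (X i j \<omega>, Y i j \<omega>)))"
      by (simp add: W_def comp_def)
    also have "\<dots> = distr (distr M (MX \<Otimes>\<^sub>M MY) (\<lambda>\<omega>. (X i j \<omega>, Y i j \<omega>))) borel s"
      by (rule distr_distr[OF s_meas XYm[OF that], symmetric])
    also have "\<dots> = \<mu> i" using samples_dist that by (simp add: \<mu>_def)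
    finally show ?thesis .
  qed

  define Pd where "Pd = distr M borel V"
  have "Pd \<in> Pfr f \<rho> s S d" using test_dist unfolding Pd_def V_def .
  then obtain S0 where PdP: "prob_space Pd" "sets Pd = sets borel" and S0: "S0 \<in> mixtures \<mu> d"
      and ac: "absolutely_continuous S0 Pd" and fdS0: "fdiv f Pd S0 \<le> ereal \<rho>"
    unfolding Pfr_def \<mu>_def by blast
  from S0 obtain lam where sS0: "sets S0 = sets borel" and lam0: "\<forall>i<d. 0 \<le> lam i"
      and lam1: "(\<Sum>i<d. lam i) = 1"
      and lamE: "\<forall>A\<in>sets borel. emeasure S0 A = (\<Sum>i<d. ennreal (lam i) * emeasure (\<mu> i) A)"
    unfolding mixtures_def by blast
  have spS0: "space S0 = UNIV" using sets_eq_imp_space_eq[OF sS0] by simp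
  have S0prob: "prob_space S0"
  proof (rule prob_spaceI)
    have "emeasure S0 (space S0) = (\<Sum>i<d. ennreal (lam i) * emeasure (\<mu> i) UNIV)"
      using lamE spS0 by simp
    also have "\<dots> = (\<Sum>i<d. ennreal (lam i))"
    proof (intro sum.cong refl)
      fix i assume "i \<in> {..<d}"
      then interpret real_distribution "\<mu> i" using \<mu>rd by simp
      show "ennreal (lam i) * emeasure (\<mu> i) UNIV = ennreal (lam i)"
        using emeasure_space_1 by simp
    qed
    also have "\<dots> = ennreal (\<Sum>i<d. lam i)" using lam0 by (intro sum_ennreal) auto
    finally show "emeasure S0 (space S0) = 1" using lam1 by simp
  qed

  have "\<forall>i. \<exists>a. i < d \<longrightarrow> (L \<le> measure (\<mu> i) {..a} \<and> measure (\<mu> i) {..<a} \<le> L)"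
    using quantile_point[OF \<mu>rd L] by blast
  from choice[OF this] obtain A where Aprop: "\<And>i. i < d \<Longrightarrow> L \<le> measure (\<mu> i) {..A i} \<and> measure (\<mu> i) {..<A i} \<le> L"
    by blast
  define a where "a = Max (A ` {..<d})"
  have "a \<in> A ` {..<d}" unfolding a_def using m0d by (intro Max_in) auto
  then obtain i0 where i0: "i0 < d" "a = A i0" by auto
  have a_ge: "A i \<le> a" if "i < d" for i unfolding a_def using that by (intro Max_ge) auto

  define \<beta> where "\<beta> = measure S0 {..a}"
  have "ennreal L \<le> emeasure S0 {..a}"
  proof -
    have "ennreal L = ennreal (\<Sum>i<d. lam i * L)" using lam1 by (simp add: sum_distrib_right[symmetric])
    also have "\<dots> = (\<Sum>i<d. ennreal (lam i) * ennreal L)"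
      using lam0 L by (subst sum_ennreal[symmetric]) (auto simp: ennreal_mult)
    also have "\<dots> \<le> (\<Sum>i<d. ennreal (lam i) * emeasure (\<mu> i) {..a})"
    proof (intro sum_mono mult_left_mono)
      fix i assume i: "i \<in> {..<d}"
      interpret real_distribution "\<mu> i" using \<mu>rd i by simp
      have "L \<le> measure (\<mu> i) {..A i}" using Aprop i by simp
      also have "\<dots> \<le> measure (\<mu> i) {..a}" using a_ge i by (intro finite_measure_mono) auto
      finally show "ennreal L \<le> emeasure (\<mu> i) {..a}" by (simp add: emeasure_eq_measure)
    qed simp
    also have "\<dots> = emeasure S0 {..a}" using lamE by simp
    finally show ?thesis .
  qed
  then have \<beta>L: "L \<le> \<beta>"
  proof -
    interpret S0: prob_space S0 by (rule S0prob)
    assume "ennreal L \<le> emeasure S0 {..a}"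
    then show ?thesis unfolding \<beta>_def S0.emeasure_eq_measure using L by (simp add: ennreal_le_iff)
  qed
  have \<beta>01: "0 \<le> \<beta>" "\<beta> \<le> 1" unfolding \<beta>_def using prob_space.prob_le_1[OF S0prob] by simp_all
  define z where "z = measure Pd {..a}"
  have z01: "0 \<le> z" "z \<le> 1" unfolding z_def using prob_space.prob_le_1[OF PdP(1)] by simp_all
  have "persp f \<beta> z + persp f (1 - \<beta>) (1 - z) \<le> ereal \<rho>"
    unfolding \<beta>_def z_def by (rule fdiv_persp[OF f_ok S0prob PdP(1) _ ac fdS0]) (simp_all add: PdP(2) sS0)
  then have gz: "g_fr f \<rho> \<beta> \<le> z" by (intro g_fr_le) (use z01 in auto)
  have g\<beta>: "\<tau> < g_fr f \<rho> \<beta>"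
  proof (rule ccontr)
    assume "\<not> \<tau> < g_fr f \<rho> \<beta>"
    then have "\<beta> \<le> b" unfolding b_def by (intro ginv(3)) (use \<beta>01 tau_pos in auto)
    then show False using \<beta>L \<delta>pos by (simp add: L_def)
  qed
  have z_tau: "\<tau> \<le> z" using gz g\<beta> by simp
  define VA where "VA = {\<omega> \<in> space M. V \<omega> \<le> a}"
  have zeq: "z = M.prob VA"
  proof -
    have "z = measure M (V -` {..a} \<inter> space M)" unfolding z_def Pd_def by (rule measure_distr[OF Vm]) simp
    also have "V -` {..a} \<inter> space M = VA" by (auto simp: VA_def)
    finally show ?thesis .
  qed

  define m0 where "m0 = m i0"
  have m0pos: "0 < m0" using m_pos i0 by (simp add: m0_def)
  define Z where "Z = (\<lambda>j \<omega>. indicator {..<a} (s (X i0 j \<omega>, Y i0 j \<omega>)) :: real)"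
  have ind_meas: "(\<lambda>p. indicator {..<a} (s p) :: real) \<in> borel_measurable (MX \<Otimes>\<^sub>M MY)"
    using s_meas by measurable
  have indZ: "M.indep_vars (\<lambda>_. borel) Z {..<m0}"
    unfolding Z_def m0_def
    by (rule M.indep_vars_compose2[OF samples_indep[rule_format, OF i0(1)]]) (rule ind_meas)
  define musum where "musum = (\<Sum>j<m0. M.expectation (Z j))"
  interpret H: Hoeffding_ineq M "{..<m0}" Z "\<lambda>_. 0" "\<lambda>_. 1" musum
    by (unfold_locales; (rule indZ)?) (simp_all add: musum_def Z_def indicator_def)
  have EZ: "M.expectation (Z j) \<le> L" if j: "j < m0" for j
  proof -
    have Wij: "W i0 j \<in> borel_measurable M" using Wm i0 j by (simp add: m0_def)
    have "M.expectation (Z j) = M.expectation (\<lambda>\<omega>. indicator {..<a} (W i0 j \<omega>))"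
      by (simp add: Z_def W_def)
    also have "\<dots> = integral\<^sup>L (distr M borel (W i0 j)) (indicator {..<a})"
      by (rule integral_distr[OF Wij, symmetric]) simp
    also have "\<dots> = integral\<^sup>L (\<mu> i0) (indicator {..<a})" using distW i0 j by (simp add: m0_def)
    also have "\<dots> = measure (\<mu> i0) {..<A i0}"
    proof -
      interpret real_distribution "\<mu> i0" using \<mu>rd i0 by simp
      show ?thesis using i0 by simp
    qed
    also have "\<dots> \<le> L" using Aprop i0 by simp
    finally show ?thesis .
  qed
  have musum_le: "musum \<le> real m0 * L"
  proof -
    have "musum \<le> (\<Sum>j<m0. L)" unfolding musum_def by (intro sum_mono EZ) simp
    then show ?thesis by simp
  qed
  define \<epsilon>' where "\<epsilon>' = \<epsilon> - \<delta>"
  have eps'pos: "0 < \<epsilon>'" using \<delta>le eps_pos by (simp add: \<epsilon>'_def)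
  define Bad where "Bad = {x \<in> space M. (b + \<epsilon>) * real m0 \<le> (\<Sum>j<m0. Z j x)}"
  have hoeff: "M.prob {x\<in>space M. (\<Sum>j\<in>{..<m0}. Z j x) \<ge> musum + \<epsilon>' * real m0}
      \<le> exp (-2 * (\<epsilon>' * real m0)\<^sup>2 / (\<Sum>j\<in>{..<m0}. (1 - 0)\<^sup>2))"
    by (rule H.Hoeffding_ineq_ge) (use eps'pos m0pos in simp_all)
  have hsum: "(\<Sum>j\<in>{..<m0}. (1 - 0 :: real)\<^sup>2) = real m0" by simp
  have expeq: "-2 * (\<epsilon>' * real m0)\<^sup>2 / real m0 = - 2 * real m0 * \<epsilon>'\<^sup>2"
    using m0pos by (simp add: power2_eq_square field_simps)
  have Zm: "(\<lambda>x. \<Sum>j<m0. Z j x) \<in> borel_measurable M"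
    by (intro borel_measurable_sum) (use H.random_variable in simp)
  have BadSub: "Bad \<subseteq> {x\<in>space M. (\<Sum>j\<in>{..<m0}. Z j x) \<ge> musum + \<epsilon>' * real m0}"
  proof
    fix x assume "x \<in> Bad"
    then have x: "x \<in> space M" "(b + \<epsilon>) * real m0 \<le> (\<Sum>j<m0. Z j x)" by (auto simp: Bad_def)
    have "musum + \<epsilon>' * real m0 \<le> real m0 * L + \<epsilon>' * real m0" using musum_le by simp
    also have "\<dots> = (b + \<epsilon>) * real m0" by (simp add: L_def \<epsilon>'_def algebra_simps)
    finally show "x \<in> {x\<in>space M. (\<Sum>j\<in>{..<m0}. Z j x) \<ge> musum + \<epsilon>' * real m0}" using x by simp
  qed
  have Bad_sets: "Bad \<in> sets M" unfolding Bad_def using Zm by measurable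
  have pBad1: "M.prob Bad \<le> exp (- 2 * real m0 * \<epsilon>'\<^sup>2)"
  proof -
    have "M.prob Bad \<le> M.prob {x\<in>space M. (\<Sum>j\<in>{..<m0}. Z j x) \<ge> musum + \<epsilon>' * real m0}"
      by (rule M.finite_measure_mono[OF BadSub]) (use Zm in measurable)
    also have "\<dots> \<le> exp (- 2 * real m0 * \<epsilon>'\<^sup>2)" using hoeff unfolding hsum expeq .
    finally show ?thesis .
  qed
  have pBad2: "exp (- 2 * real m0 * \<epsilon>'\<^sup>2) \<le> 2 * exp (- 2 * real m0 * \<epsilon>\<^sup>2)"
  proof -
    have diff: "\<epsilon>\<^sup>2 - \<epsilon>'\<^sup>2 = \<delta> * (2 * \<epsilon> - \<delta>)" by (simp add: \<epsilon>'_def power2_eq_square algebra_simps)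
    have "\<delta> * (2 * \<epsilon> - \<delta>) \<le> \<delta> * (2 * \<epsilon>)" using \<delta>pos by (intro mult_left_mono) auto
    also have "\<dots> \<le> (1 / (8 * \<epsilon> * K)) * (2 * \<epsilon>)" using \<delta>le(2) eps_pos by (intro mult_right_mono) auto
    also have "\<dots> = 1 / (4 * K)" using eps_pos K1 by (simp add: field_simps)
    finally have d1: "\<epsilon>\<^sup>2 - \<epsilon>'\<^sup>2 \<le> 1 / (4 * K)" using diff by simp
    have "2 * real m0 * (\<epsilon>\<^sup>2 - \<epsilon>'\<^sup>2) \<le> 2 * real m0 * (1 / (4 * K))"
      using d1 by (intro mult_left_mono) auto
    also have "\<dots> = real m0 / K / 2" by (simp add: field_simps)
    also have "\<dots> \<le> 1 / 2" using mleK[OF i0(1)] K1 by (simp add: m0_def field_simps)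
    finally have d2: "2 * real m0 * (\<epsilon>\<^sup>2 - \<epsilon>'\<^sup>2) \<le> 1 / 2" .
    have "exp (- 2 * real m0 * \<epsilon>'\<^sup>2) = exp (- 2 * real m0 * \<epsilon>\<^sup>2) * exp (2 * real m0 * (\<epsilon>\<^sup>2 - \<epsilon>'\<^sup>2))"
      by (simp add: exp_add[symmetric] algebra_simps)
    also have "\<dots> \<le> exp (- 2 * real m0 * \<epsilon>\<^sup>2) * exp (1 / 2)"
      using d2 by (intro mult_left_mono) auto
    also have "\<dots> \<le> exp (- 2 * real m0 * \<epsilon>\<^sup>2) * 2"
      using exp_half_le2 by (intro mult_left_mono) auto
    finally show ?thesis by simp
  qed
  have pBad3: "2 * exp (- 2 * real m0 * \<epsilon>\<^sup>2) \<le> 2 * Es"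
  proof -
    have "exp (- 2 * real m0 * \<epsilon>\<^sup>2) \<le> Es" unfolding Es_def m0_def
      using i0 by (intro member_le_sum[where i=i0 and f="\<lambda>i. exp (- 2 * real (m i) * \<epsilon>\<^sup>2)"]) auto
    then show ?thesis by simp
  qed
  define Good where "Good = space M - Bad"
  have pGood: "den \<le> M.prob Good"
  proof -
    have "M.prob Good = 1 - M.prob Bad" unfolding Good_def by (rule M.prob_compl[OF Bad_sets])
    then show ?thesis using pBad1 pBad2 pBad3 by (simp add: den_def)
  qed
  have Good_eq: "Good = {x \<in> space M. (\<Sum>j<m0. Z j x) < (b + \<epsilon>) * real m0}"
    by (auto simp: Good_def Bad_def)

  define Wall where "Wall = (\<lambda>\<omega>. \<lambda>p\<in>I. s (X (fst p) (snd p) \<omega>, Y (fst p) (snd p) \<omega>))"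
  have indep: "M.indep_set (sets (vimage_algebra (space M) V borel))
                 (sets (vimage_algebra (space M) Wall (\<Pi>\<^sub>M p\<in>I. borel)))"
    using test_indep unfolding V_def Wall_def .
  have VA_in: "VA \<in> sets (vimage_algebra (space M) V borel)"
  proof -
    have "V -` {..a} \<inter> space M \<in> sets (vimage_algebra (space M) V borel)"
      by (rule in_vimage_algebra) simp
    also have "V -` {..a} \<inter> space M = VA" by (auto simp: VA_def)
    finally show ?thesis .
  qed
  define hB where "hB = (\<lambda>w. \<Sum>j<m0. indicator {..<a} (w (i0, j)) :: real)"
  have I_mem: "(i0, j) \<in> I" if "j < m0" for j using that i0 by (simp add: I_def m0_def)
  have hBm: "hB \<in> borel_measurable (\<Pi>\<^sub>M p\<in>I. borel)"
    unfolding hB_def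
  proof (intro borel_measurable_sum)
    fix j assume "j \<in> {..<m0}"
    then have "(\<lambda>w. w (i0, j)) \<in> measurable (\<Pi>\<^sub>M p\<in>I. borel) borel"
      using measurable_component_singleton[OF I_mem, of j "\<lambda>_. borel"] by simp
    then show "(\<lambda>w. indicator {..<a} (w (i0, j)) :: real) \<in> borel_measurable (\<Pi>\<^sub>M p\<in>I. borel)"
      by measurable
  qed
  define Bset where "Bset = hB -` {..<(b + \<epsilon>) * real m0} \<inter> space (\<Pi>\<^sub>M p\<in>I. (borel :: real measure))"
  have Bset_in: "Bset \<in> sets (\<Pi>\<^sub>M p\<in>I. borel)" unfolding Bset_def by (rule measurable_sets[OF hBm]) simp
  have Good_in: "Good \<in> sets (vimage_algebra (space M) Wall (\<Pi>\<^sub>M p\<in>I. borel))"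
  proof -
    have "Wall -` Bset \<inter> space M \<in> sets (vimage_algebra (space M) Wall (\<Pi>\<^sub>M p\<in>I. borel))"
      by (rule in_vimage_algebra[OF Bset_in])
    also have "Wall -` Bset \<inter> space M = Good"
    proof -
      have "Wall \<omega> \<in> space (\<Pi>\<^sub>M p\<in>I. (borel :: real measure))" for \<omega>
        by (simp add: Wall_def space_PiM)
      moreover have "hB (Wall \<omega>) = (\<Sum>j<m0. Z j \<omega>)" for \<omega>
        unfolding hB_def Z_def Wall_def using I_mem by (intro sum.cong) auto
      ultimately show ?thesis unfolding Good_eq Bset_def by auto
    qed
    finally show ?thesis .
  qed
  have pprod: "M.prob (VA \<inter> Good) = M.prob VA * M.prob Good"
    by (rule M.indep_setD[OF indep VA_in Good_in])

  define Tg where "Tg = {\<omega> \<in> space M. Yn \<omega> \<in> {y \<in> space MY. s (Xn \<omega>, y) \<le> t \<omega>}}"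
  have Yn_sp: "Yn \<omega> \<in> space MY" if "\<omega> \<in> space M" for \<omega> using measurable_space[OF test_meas(2) that] .
  have t_char: "V \<omega> \<le> t \<omega> \<longleftrightarrow> (\<exists>i\<in>{..<d}. (\<Sum>j<m i. if W i j \<omega> < V \<omega> then 1 else 0) < c * real (m i))" for \<omega>
    unfolding t_def c_def[symmetric] W_def using quant_char[OF d_pos m_pos c_pos c_le, where w="\<lambda>i j. s (X i j \<omega>, Y i j \<omega>)" and v="V \<omega>"]
    by (simp add: Bex_def)
  have Tg_eq: "Tg = {\<omega> \<in> space M. \<exists>i\<in>{..<d}. (\<Sum>j<m i. if W i j \<omega> < V \<omega> then 1 else 0) < c * real (m i)}"
    unfolding Tg_def using Yn_sp t_char by (auto simp: V_def)
  have Tg_sets: "Tg \<in> sets M" unfolding Tg_eq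
  proof (rule sets.sets_Collect_finite_Ex)
    fix i assume i: "i \<in> {..<d}"
    have "(\<lambda>\<omega>. \<Sum>j<m i. if W i j \<omega> < V \<omega> then 1 else (0::real)) \<in> borel_measurable M"
    proof (intro borel_measurable_sum)
      fix j assume j: "j \<in> {..<m i}"
      have [measurable]: "W i j \<in> borel_measurable M" using Wm i j by simp
      note Vm[measurable]
      show "(\<lambda>\<omega>. if W i j \<omega> < V \<omega> then 1 else (0::real)) \<in> borel_measurable M" by measurable
    qed
    then show "{\<omega> \<in> space M. (\<Sum>j<m i. if W i j \<omega> < V \<omega> then 1 else 0) < c * real (m i)} \<in> sets M"
      by measurable
  qed simp
  have sub: "VA \<inter> Good \<subseteq> Tg"
  proof
    fix \<omega> assume "\<omega> \<in> VA \<inter> Good"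
    then have \<omega>: "\<omega> \<in> space M" "V \<omega> \<le> a" "(\<Sum>j<m0. Z j \<omega>) < (b + \<epsilon>) * real m0"
      by (auto simp: VA_def Good_eq)
    have "(\<Sum>j<m i0. if W i0 j \<omega> < V \<omega> then 1 else (0::real)) \<le> (\<Sum>j<m0. Z j \<omega>)"
      unfolding m0_def Z_def W_def using \<omega>(2) by (intro sum_mono) (auto simp: indicator_def)
    also have "\<dots> < (b + \<epsilon>) * real m0" by (rule \<omega>(3))
    also have "\<dots> \<le> c * real (m i0)" using c_ge by (simp add: m0_def mult_right_mono)
    finally show "\<omega> \<in> Tg" unfolding Tg_eq using \<omega>(1) i0(1) by auto
  qed
  have "1 - \<alpha> = \<tau> * den" using den_pos by (simp add: \<tau>_def)
  also have "\<dots> \<le> M.prob VA * M.prob Good"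
    using z_tau zeq pGood tau_pos den_pos by (intro mult_mono) auto
  also have "\<dots> = M.prob (VA \<inter> Good)" by (rule pprod[symmetric])
  also have "\<dots> \<le> M.prob Tg" by (rule M.finite_measure_mono[OF sub Tg_sets])
  finally show ?thesis unfolding Tg_def .
qed

end
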